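(* Let $K\in L^2(X\times X,\mu\times\mu)$ be $L^2(X,\mu)$-positive definite. If $\limsup_{n\to\infty}\int_X E_n(K)(x,x)\,d\mu(x)<\infty$, then $\limsup_{n\to\infty}\mathrm{tr}(\mathcal{E}^n_K)<\infty$.
   Context: Standing setting: $X$ is a Hausdorff, locally compact, second countable topological space and $\mu$ is a non-degenerate, $\sigma$-finite, locally finite Borel measure on $X$. Fix an open cover of $X$ by open sets, each the interior of a compact set and of finite $\mu$-measure, and extract a countable subcover $\{\mathcal{A}_k\}_{k\ge 0}$. Let $\mathcal{P}_0$ be the partition of $X$ consisting of $\mathcal{A}_k\setminus\overline{\mathcal{A}_0\cup\dots\cup\mathcal{A}_{k-1}}$ and $\partial\mathcal{A}_k\setminus\overline{\mathcal{A}_0\cup\dots\cup\mathcal{A}_{k-1}}$, $k\ge0$. Fix a countable base $\{\mathcal{U}_n\}_{n\ge0}$ and set $\mathcal{P}_{n+1}=\{\mathcal{U}_n\cap A\}\cup\{(X\setminus\overline{\mathcal{U}_n})\cap A\}\cup\{\partial\mathcal{U}_n\cap A\}$, $A\in\mathcal{P}_n$. $O_n(x)$ is the unique element of $\mathcal{P}_n$ containing $x$; $\mathfrak{N}=\{x:\mu(O_m(x))=0\text{ for some }m\}$. For $u,v\in X\setminus\mathfrak{N}$, $E_n(K)(u,v)=\frac{1}{\mu(O_n(u))\mu(O_n(v))}\int_{O_n(u)}\int_{O_n(v)}K(x,y)\,d\mu(y)\,d\mu(x)$, and $\mathcal{E}^n_K$ is the integral operator on $L^2(X,\mu)$ with kernel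 $E_n(K)$. $K$ is $L^2(X,\mu)$-positive definite if its integral operator $\mathcal{K}(f)=\int_XK(\cdot,y)f(y)\,d\mu(y)$ satisfies $\langle\mathcal{K}f,f\rangle\ge0$ for all $f\in L^2(X,\mu)$. $\mathrm{tr}$ denotes the trace of a trace-class operator. *)

theory Defs
  imports "HOL-Analysis.Analysis"
begin

fun partitionP :: "(nat \<Rightarrow> 'a::topological_space set) \<Rightarrow> (nat \<Rightarrow> 'a set) \<Rightarrow> nat \<Rightarrow> 'a set set" where
  "partitionP A U 0 =
     range (\<lambda>k. A k - closure (\<Union>j<k. A j)) \<union>
     range (\<lambda>k. frontier (A k) - closure (\<Union>j<k. A j))"
| "partitionP A U (Suc n) =
     (\<Union>B\<in>partitionP A U n.
        {U n \<inter> B, (UNIV - closure (U n)) \<inter> B, frontier (U n) \<inter> B})"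

definition cellO :: "(nat \<Rightarrow> 'a::topological_space set) \<Rightarrow> (nat \<Rightarrow> 'a set) \<Rightarrow> nat \<Rightarrow> 'a \<Rightarrow> 'a set" where
  "cellO A U n x = (THE B. B \<in> partitionP A U n \<and> x \<in> B)"

definition nullpts :: "'a::topological_space measure \<Rightarrow> (nat \<Rightarrow> 'a set) \<Rightarrow> (nat \<Rightarrow> 'a set) \<Rightarrow> 'a set" where
  "nullpts M A U = {x. \<exists>m. emeasure M (cellO A U m x) = 0}"

text \<open>The averaged kernel E_n(K); set to 0 on the null set \<frak>N where it is undefined.\<close>
definition En :: "'a::topological_space measure \<Rightarrow> (nat \<Rightarrow> 'a set) \<Rightarrow> (nat \<Rightarrow> 'a set) \<Rightarrow> nat
                  \<Rightarrow> ('a \<Rightarrow> 'a \<Rightarrow> real) \<Rightarrow> 'a \<Rightarrow> 'a \<Rightarrow> real" where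
  "En M A U n K u v =
     (if u \<notin> nullpts M A U \<and> v \<notin> nullpts M A U then
        1 / (measure M (cellO A U n u) * measure M (cellO A U n v)) *
        (LINT x:cellO A U n u|M. (LINT y:cellO A U n v|M. K x y))
      else 0)"

definition L2 :: "'a measure \<Rightarrow> ('a \<Rightarrow> real) set" where
  "L2 M = {f. f \<in> borel_measurable M \<and> integrable M (\<lambda>x. (f x)\<^sup>2)}"

definition intop :: "'a measure \<Rightarrow> ('a \<Rightarrow> 'a \<Rightarrow> real) \<Rightarrow> ('a \<Rightarrow> real) \<Rightarrow> 'a \<Rightarrow> real" where
  "intop M k f = (\<lambda>x. LINT y|M. k x y * f y)"

definition L2_pos_def_kernel :: "'a measure \<Rightarrow> ('a \<Rightarrow> 'a \<Rightarrow> real) \<Rightarrow> bool" where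
  "L2_pos_def_kernel M k \<longleftrightarrow> (\<forall>f\<in>L2 M. (LINT x|M. intop M k f x * f x) \<ge> 0)"

definition orthonormal_fam :: "'a measure \<Rightarrow> nat \<Rightarrow> (nat \<Rightarrow> 'a \<Rightarrow> real) \<Rightarrow> bool" where
  "orthonormal_fam M m e \<longleftrightarrow> (\<forall>i<m. e i \<in> L2 M) \<and>
     (\<forall>i<m. \<forall>j<m. (LINT x|M. e i x * e j x) = (if i = j then 1 else 0))"

text \<open>For a positive operator this is its trace (finite iff trace class).\<close>
definition op_trace :: "'a measure \<Rightarrow> ('a \<Rightarrow> 'a \<Rightarrow> real) \<Rightarrow> ereal" where
  "op_trace M k = (SUP (m, e)\<in>{(m, e). orthonormal_fam M m e}.
       ereal (\<Sum>i<m. LINT x|M. intop M k (e i) x * e i x))"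

end

theory Submission
  imports Defs
begin


definition qf :: "nat \<Rightarrow> (nat \<Rightarrow> nat \<Rightarrow> real) \<Rightarrow> (nat \<Rightarrow> real) \<Rightarrow> real" where
  "qf N k v = (\<Sum>j<N. \<Sum>l<N. k j l * v j * v l)"

lemma qf_Suc:
  "qf (Suc N) k v = qf N k v + v N * (\<Sum>j<N. (k j N + k N j) * v j) + k N N * (v N)^2"
  by (simp add: qf_def sum.distrib sum_distrib_left sum_distrib_right algebra_simps power2_eq_square)

lemma qf_cong: "(\<And>j. j < N \<Longrightarrow> v j = w j) \<Longrightarrow> qf N k v = qf N k w"
  unfolding qf_def by (intro sum.cong refl) auto

lemma sq_expand: "(r::real) > 0 \<Longrightarrow> (a/(2*r) + r*x)^2 = a^2/(4*(r*r)) + a*x + (r*r)*x^2"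
  by (simp add: power2_eq_square field_simps)

lemma dsum: "(j::nat) < N \<Longrightarrow> (\<Sum>l<N. f l * (if l = j then 1 else 0)) = (f j :: real)"
proof -
  assume "j < N"
  have "(\<Sum>l<N. f l * (if l = j then 1 else 0)) = (\<Sum>l<N. if l = j then f l else 0)"
    by (rule sum.cong) auto
  then show ?thesis using \<open>j < N\<close> by simp
qed

lemma psd_decomp:
  assumes "\<And>v. 0 \<le> qf N k v"
  shows "\<exists>L::nat\<Rightarrow>nat\<Rightarrow>real. \<forall>v. qf N k v = (\<Sum>r<N. (\<Sum>j<N. L r j * v j)^2)"
  using assms
proof (induction N arbitrary: k)
  case 0
  then show ?case by (simp add: qf_def)
next
  case (Suc N)
  define b where "b j = k j N + k N j" for j
  define s where "s v = (\<Sum>j<N. b j * v j)" for v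
  define q where "q = k N N"
  have QS: "qf (Suc N) k v = qf N k v + v N * s v + q * (v N)^2" for v
    unfolding qf_Suc s_def b_def q_def ..
  have sN: "s (v(N := t)) = s v" for v t unfolding s_def by (intro sum.cong refl) auto
  have qN: "qf N k (v(N := t)) = qf N k v" for v t by (rule qf_cong) auto
  have pos: "0 \<le> qf N k v + t * s v + q * t^2" for v t
    using Suc.prems[of "v(N := t)"] unfolding QS by (simp add: sN qN)
  have q0: "q \<ge> 0" using pos[of "\<lambda>_. 0" 1] by (simp add: s_def qf_def)
  show ?case
  proof (cases "q = 0")
    case True
    have s0: "s v = 0" for v
    proof (rule ccontr)
      assume ne: "s v \<noteq> 0"
      have "0 \<le> qf N k v + (- (qf N k v + 1) / s v) * s v + q * (- (qf N k v + 1) / s v)^2"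
        by (rule pos)
      with ne True show False by simp
    qed
    have psd: "0 \<le> qf N k v" for v using pos[of v 0] by simp
    obtain L where L: "\<forall>v. qf N k v = (\<Sum>r<N. (\<Sum>j<N. L r j * v j)^2)"
      using Suc.IH[OF psd] by blast
    define L' where "L' r j = (if r < N \<and> j < N then L r j else 0)" for r j
    have "qf (Suc N) k v = (\<Sum>r<Suc N. (\<Sum>j<Suc N. L' r j * v j)^2)" for v
      unfolding QS s0 True using L by (simp add: L'_def)
    then show ?thesis by blast
  next
    case False
    with q0 have qp: "q > 0" by simp
    define k2 where "k2 j l = k j l - b j * b l / (4 * q)" for j l
    have q2: "qf N k2 v = qf N k v - (s v)^2 / (4*q)" for v
      unfolding k2_def qf_def s_def
      by (simp add: sum_subtractf left_diff_distrib power2_eq_square sum_distrib_left sum_distrib_right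
          sum_divide_distrib algebra_simps)
    have psd: "0 \<le> qf N k2 v" for v
    proof -
      have "0 \<le> qf N k v + (- s v / (2*q)) * s v + q * (- s v / (2*q))^2" by (rule pos)
      also have "\<dots> = qf N k2 v" using qp unfolding q2 by (simp add: power2_eq_square field_simps)
      finally show ?thesis .
    qed
    obtain L where L: "\<forall>v. qf N k2 v = (\<Sum>r<N. (\<Sum>j<N. L r j * v j)^2)"
      using Suc.IH[OF psd] by blast
    define L' where "L' r j = (if r < N then (if j < N then L r j else 0)
        else (if j < N then b j / (2 * sqrt q) else if j = N then sqrt q else 0))" for r j
    have last: "(\<Sum>j<Suc N. L' N j * v j) = s v / (2 * sqrt q) + sqrt q * v N" for v
      by (simp add: L'_def s_def sum_divide_distrib)
    have "qf (Suc N) k v = (\<Sum>r<Suc N. (\<Sum>j<Suc N. L' r j * v j)^2)" for v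
    proof -
      have "(\<Sum>r<Suc N. (\<Sum>j<Suc N. L' r j * v j)^2) = qf N k2 v + (s v / (2 * sqrt q) + sqrt q * v N)^2"
        using L by (simp add: last) (simp add: L'_def s_def sum_divide_distrib)
      also have "\<dots> = qf (Suc N) k v"
      proof -
        have sq: "sqrt q * sqrt q = q" using qp by simp
        have "(s v / (2 * sqrt q) + sqrt q * v N)^2 = (s v)^2 / (4 * (sqrt q * sqrt q)) + s v * v N + (sqrt q * sqrt q) * (v N)^2"
          using qp by (intro sq_expand) simp
        then show ?thesis unfolding QS q2 sq by (simp add: algebra_simps)
      qed
      finally show ?thesis by simp
    qed
    then show ?thesis by blast
  qed
qed

lemma trace_bound:
  assumes psd: "\<And>v. 0 \<le> qf N k v"
    and bessel: "\<And>v. (\<Sum>i<m. (\<Sum>j<N. v j * w i j)^2) \<le> (\<Sum>j<N. (v j)^2)"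
  shows "(\<Sum>i<m. qf N k (w i)) \<le> (\<Sum>j<N. k j j)"
proof -
  obtain L where L: "\<forall>v. qf N k v = (\<Sum>r<N. (\<Sum>j<N. L r j * v j)^2)"
    using psd_decomp[OF psd] by blast
  have diag: "k j j = (\<Sum>r<N. (L r j)^2)" if "j < N" for j
  proof -
    have "qf N k (\<lambda>i. if i = j then 1 else 0) = (\<Sum>ja<N. if ja = j then (\<Sum>l<N. if l = j then k j j else 0) else 0)"
      unfolding qf_def by (intro sum.cong refl) (auto simp: dsum)
    also have "\<dots> = k j j" using that by simp
    finally have "qf N k (\<lambda>i. if i = j then 1 else 0) = k j j" .
    moreover have "(\<Sum>r<N. (\<Sum>i<N. L r i * (if i = j then 1 else 0))^2) = (\<Sum>r<N. (L r j)^2)"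
      using that by (simp add: dsum)
    ultimately show ?thesis using L by metis
  qed
  have "(\<Sum>i<m. qf N k (w i)) = (\<Sum>r<N. \<Sum>i<m. (\<Sum>j<N. L r j * w i j)^2)"
    using L by (simp) (rule sum.swap)
  also have "\<dots> \<le> (\<Sum>r<N. \<Sum>j<N. (L r j)^2)"
    by (intro sum_mono bessel)
  also have "\<dots> = (\<Sum>j<N. k j j)"
    using diag by (subst sum.swap) simp
  finally show ?thesis .
qed



lemma abs_mult_le_sq: fixes a b :: real shows "\<bar>a * b\<bar> \<le> a\<^sup>2 + b\<^sup>2"
proof -
  have "0 \<le> (\<bar>a\<bar> - \<bar>b\<bar>)\<^sup>2" by simp
  then have "2 * (\<bar>a\<bar> * \<bar>b\<bar>) \<le> \<bar>a\<bar>\<^sup>2 + \<bar>b\<bar>\<^sup>2" by (simp add: power2_diff)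
  moreover have "0 \<le> \<bar>a\<bar> * \<bar>b\<bar>" by simp
  moreover have "\<bar>a * b\<bar> = \<bar>a\<bar> * \<bar>b\<bar>" by (simp add: abs_mult)
  ultimately show ?thesis by simp
qed

lemma abs_le_sq: fixes a :: real shows "\<bar>a\<bar> \<le> 1 + a\<^sup>2"
  using abs_mult_le_sq[of 1 a] by simp

lemma L2_mult_int:
  assumes "f \<in> L2 M" "g \<in> L2 M"
  shows "integrable M (\<lambda>x. f x * g x)"
proof (rule Bochner_Integration.integrable_bound[where f="\<lambda>x. (f x)\<^sup>2 + (g x)\<^sup>2"])
  show "integrable M (\<lambda>x. (f x)\<^sup>2 + (g x)\<^sup>2)" using assms unfolding L2_def by auto
  show "(\<lambda>x. f x * g x) \<in> borel_measurable M" using assms unfolding L2_def by auto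
  show "AE x in M. norm (f x * g x) \<le> norm ((f x)\<^sup>2 + (g x)\<^sup>2)"
    using abs_mult_le_sq by auto
qed

lemma L2_meas: "f \<in> L2 M \<Longrightarrow> f \<in> borel_measurable M" unfolding L2_def by auto

lemma L2_I: "f \<in> borel_measurable M \<Longrightarrow> integrable M (\<lambda>x. (f x)\<^sup>2) \<Longrightarrow> f \<in> L2 M"
  unfolding L2_def by auto

lemma alg_sqrt: fixes a b k x y :: real assumes "a \<ge> 0" "b \<ge> 0"
  shows "k / (a * b) * x * y = k / sqrt (a * b) * (x / sqrt a) * (y / sqrt b)"
proof (cases "a = 0 \<or> b = 0")
  case True then show ?thesis by auto
next
  case False
  then have "a > 0" "b > 0" using assms by auto
  then show ?thesis by (simp add: real_sqrt_mult field_simps)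
qed

lemma bessel:
  assumes on: "orthonormal_fam M m e" and g: "g \<in> L2 M"
  shows "(\<Sum>i<m. (LINT x|M. e i x * g x)\<^sup>2) \<le> (LINT x|M. (g x)\<^sup>2)"
proof -
  define a where "a i = (LINT x|M. e i x * g x)" for i
  have eL2: "i < m \<Longrightarrow> e i \<in> L2 M" for i using on unfolding orthonormal_fam_def by auto
  have ee: "i < m \<Longrightarrow> k < m \<Longrightarrow> (LINT x|M. e i x * e k x) = (if i = k then 1 else 0)" for i k
    using on unfolding orthonormal_fam_def by auto
  have ie: "i < m \<Longrightarrow> k < m \<Longrightarrow> integrable M (\<lambda>x. e i x * e k x)" for i k
    using L2_mult_int eL2 by blast
  have ig: "i < m \<Longrightarrow> integrable M (\<lambda>x. e i x * g x)" for i
    using L2_mult_int eL2 g by blast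
  have g2: "integrable M (\<lambda>x. (g x)\<^sup>2)" using g unfolding L2_def by auto
  have pt: "(g x - (\<Sum>i<m. a i * e i x))\<^sup>2 =
     (g x)\<^sup>2 - 2 * (\<Sum>i<m. a i * (e i x * g x)) + (\<Sum>i<m. \<Sum>k<m. a i * a k * (e i x * e k x))" for x
    by (simp add: power2_diff power2_eq_square sum_distrib_left sum_distrib_right sum_product algebra_simps)
  have "0 \<le> (LINT x|M. (g x - (\<Sum>i<m. a i * e i x))\<^sup>2)" by simp
  also have "\<dots> = (LINT x|M. (g x)\<^sup>2 - 2 * (\<Sum>i<m. a i * (e i x * g x)) + (\<Sum>i<m. \<Sum>k<m. a i * a k * (e i x * e k x)))"
    by (simp only: pt)
  also have "\<dots> = (LINT x|M. (g x)\<^sup>2) - 2 * (\<Sum>i<m. a i * (LINT x|M. e i x * g x)) + (\<Sum>i<m. \<Sum>k<m. a i * a k * (LINT x|M. e i x * e k x))"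
  proof -
    have i1: "integrable M (\<lambda>x. \<Sum>i<m. a i * (e i x * g x))"
      using ig by (intro Bochner_Integration.integrable_sum integrable_mult_right) auto
    have i2: "integrable M (\<lambda>x. \<Sum>i<m. \<Sum>k<m. a i * a k * (e i x * e k x))"
      using ie by (intro Bochner_Integration.integrable_sum integrable_mult_right) auto
    have l1: "(LINT x|M. (\<Sum>i<m. a i * (e i x * g x))) = (\<Sum>i<m. a i * (LINT x|M. e i x * g x))"
      using ig by (subst Bochner_Integration.integral_sum) (auto intro!: integrable_mult_right)
    have l2: "(LINT x|M. (\<Sum>i<m. \<Sum>k<m. a i * a k * (e i x * e k x))) = (\<Sum>i<m. \<Sum>k<m. a i * a k * (LINT x|M. e i x * e k x))"
      using ie by (subst Bochner_Integration.integral_sum)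
        (auto intro!: integrable_mult_right Bochner_Integration.integrable_sum sum.cong simp: Bochner_Integration.integral_sum)
    have "(LINT x|M. (g x)\<^sup>2 - 2 * (\<Sum>i<m. a i * (e i x * g x)) + (\<Sum>i<m. \<Sum>k<m. a i * a k * (e i x * e k x)))
      = (LINT x|M. (g x)\<^sup>2 - 2 * (\<Sum>i<m. a i * (e i x * g x))) + (LINT x|M. (\<Sum>i<m. \<Sum>k<m. a i * a k * (e i x * e k x)))"
      using g2 i1 i2 by (intro Bochner_Integration.integral_add Bochner_Integration.integrable_diff integrable_mult_right)
    also have "(LINT x|M. (g x)\<^sup>2 - 2 * (\<Sum>i<m. a i * (e i x * g x))) = (LINT x|M. (g x)\<^sup>2) - 2 * (LINT x|M. (\<Sum>i<m. a i * (e i x * g x)))"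
      using g2 i1 by (subst Bochner_Integration.integral_diff) (auto intro!: integrable_mult_right)
    finally show ?thesis using l1 l2 by simp
  qed
  also have "(\<Sum>i<m. \<Sum>k<m. a i * a k * (LINT x|M. e i x * e k x)) = (\<Sum>i<m. (a i)\<^sup>2)"
  proof -
    have "(\<Sum>i<m. \<Sum>k<m. a i * a k * (LINT x|M. e i x * e k x)) = (\<Sum>i<m. \<Sum>k<m. (if k = i then a i * a k else 0))"
      by (intro sum.cong refl) (simp add: ee)
    also have "\<dots> = (\<Sum>i<m. (a i)\<^sup>2)" by (simp add: power2_eq_square)
    finally show ?thesis .
  qed
  also have "(\<Sum>i<m. a i * (LINT x|M. e i x * g x)) = (\<Sum>i<m. (a i)\<^sup>2)"
    by (simp add: a_def power2_eq_square)
  finally show ?thesis by (simp add: a_def)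
qed

lemma alg2: fixes v u p q k :: real shows "v / p * (u / q) * k = k / (p * q) * v * u"
  by (simp add: field_split_simps)

locale cells =
  fixes M :: "'a measure" and c :: "nat \<Rightarrow> 'a set" and Nn :: "'a set" and K :: "'a \<Rightarrow> 'a \<Rightarrow> real"
  assumes sfin: "sigma_finite_measure M"
  and space_M: "space M = UNIV"
  and c_sets[measurable]: "\<And>j. c j \<in> sets M"
  and c_fin: "\<And>j. emeasure M (c j) < \<infinity>"
  and c_disj: "disjoint_family c"
  and c_cover: "(\<Union>j. c j) = UNIV"
  and Nn_sets[measurable]: "Nn \<in> sets M"
  and Nn_null: "emeasure M Nn = 0"
  and c_null: "\<And>j. measure M (c j) = 0 \<Longrightarrow> c j \<subseteq> Nn"
  and K_meas[measurable]: "(\<lambda>(x, y). K x y) \<in> borel_measurable (M \<Otimes>\<^sub>M M)"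
  and K_L2: "integrable (M \<Otimes>\<^sub>M M) (\<lambda>(x, y). (K x y)\<^sup>2)"
  and K_pd: "L2_pos_def_kernel M K"
begin

interpretation sigma_finite_measure M by (rule sfin)
interpretation P: pair_sigma_finite M M by unfold_locales

definition ix :: "'a \<Rightarrow> nat" where "ix x = (THE j. x \<in> c j)"

lemma ix_eq: "x \<in> c j \<Longrightarrow> ix x = j"
  unfolding ix_def using c_disj by (auto simp: disjoint_family_on_def intro!: the_equality)

lemma ix: "x \<in> c (ix x)"
proof -
  obtain j where "x \<in> c j" using c_cover by auto
  then show ?thesis using ix_eq by simp
qed

lemma ind_c: "indicator (c j) x = (if j = ix x then 1 else (0::'b::zero_neq_one))"
  using ix ix_eq by (auto simp: indicator_def)

lemma ix_meas[measurable]: "ix \<in> measurable M (count_space UNIV)"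
proof -
  have "ix -` {j} \<inter> space M = c j" for j using ix ix_eq by (auto simp: space_M)
  then show ?thesis by (auto simp: measurable_count_space_eq2_countable space_M)
qed

definition mu :: "nat \<Rightarrow> real" where "mu j = measure M (c j)"
definition kk :: "nat \<Rightarrow> nat \<Rightarrow> real" where "kk j l = (LINT s:c j|M. (LINT t:c l|M. K s t))"
definition E :: "'a \<Rightarrow> 'a \<Rightarrow> real" where
  "E x y = (if x \<notin> Nn \<and> y \<notin> Nn then 1 / (mu (ix x) * mu (ix y)) * kk (ix x) (ix y) else 0)"

lemma emeasure_c: "emeasure M (c j) = ennreal (mu j)"
  using c_fin[of j] unfolding mu_def measure_def by simp

lemma mu_nonneg: "mu j \<ge> 0" unfolding mu_def by simp

lemma E_meas[measurable]: "(\<lambda>(x, y). E x y) \<in> borel_measurable (M \<Otimes>\<^sub>M M)"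
proof -
  define F where "F = (\<lambda>(j::nat,l::nat) (p::'a\<times>'a). if fst p \<notin> Nn \<and> snd p \<notin> Nn then 1 / (mu j * mu l) * kk j l else 0)"
  have g: "(\<lambda>p. (ix (fst p), ix (snd p))) \<in> measurable (M \<Otimes>\<^sub>M M) (count_space UNIV)"
  proof -
    have "(\<lambda>p. (ix (fst p), ix (snd p))) -` {(j,l)} \<inter> space (M \<Otimes>\<^sub>M M) = c j \<times> c l" for j l
      using ix ix_eq by (auto simp: space_pair_measure space_M)
    then show ?thesis by (auto simp: measurable_count_space_eq2_countable)
  qed
  have "(\<lambda>p. F (ix (fst p), ix (snd p)) p) \<in> borel_measurable (M \<Otimes>\<^sub>M M)"
    by (rule measurable_compose_countable[OF _ g]) (auto simp: F_def)
  moreover have "(\<lambda>(x, y). E x y) = (\<lambda>p. F (ix (fst p), ix (snd p)) p)"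
    by (auto simp: F_def E_def fun_eq_iff)
  ultimately show ?thesis by simp
qed

lemma nn_rect_decomp:
  assumes [measurable]: "f \<in> borel_measurable (M \<Otimes>\<^sub>M M)"
  shows "(\<integral>\<^sup>+p. f p \<partial>(M \<Otimes>\<^sub>M M)) =
    (\<Sum>j. \<Sum>l. \<integral>\<^sup>+p. indicator (c j \<times> c l) p * f p \<partial>(M \<Otimes>\<^sub>M M))"
proof -
  have one: "(\<Sum>j. indicator (c j) x :: ennreal) = 1" for x
    using c_cover by (simp add: suminf_indicator[OF c_disj])
  have pt: "f p = (\<Sum>j. \<Sum>l. indicator (c j \<times> c l) p * f p)" for p
  proof -
    have "(\<Sum>j. \<Sum>l. indicator (c j \<times> c l) p * f p) = (\<Sum>j. indicator (c j) (fst p) * ((\<Sum>l. indicator (c l) (snd p)) * f p))"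
      by (simp add: indicator_times ennreal_suminf_multc mult.assoc ennreal_suminf_cmult[symmetric])
    also have "\<dots> = f p" by (simp add: one ennreal_suminf_multc)
    finally show ?thesis by simp
  qed
  have "(\<integral>\<^sup>+p. f p \<partial>(M \<Otimes>\<^sub>M M)) = (\<integral>\<^sup>+p. (\<Sum>j. \<Sum>l. indicator (c j \<times> c l) p * f p) \<partial>(M \<Otimes>\<^sub>M M))"
    by (subst pt) simp
  also have "\<dots> = (\<Sum>j. \<integral>\<^sup>+p. (\<Sum>l. indicator (c j \<times> c l) p * f p) \<partial>(M \<Otimes>\<^sub>M M))"
    by (rule nn_integral_suminf) measurable
  also have "\<dots> = (\<Sum>j. \<Sum>l. \<integral>\<^sup>+p. indicator (c j \<times> c l) p * f p \<partial>(M \<Otimes>\<^sub>M M))"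
    by (intro suminf_cong nn_integral_suminf) measurable
  finally show ?thesis .
qed

lemma rect_sets[measurable]: "c j \<times> c l \<in> sets (M \<Otimes>\<^sub>M M)" by simp

lemma rect_emeasure: "emeasure (M \<Otimes>\<^sub>M M) (c j \<times> c l) = ennreal (mu j * mu l)"
  by (simp add: emeasure_pair_measure_Times emeasure_c ennreal_mult mu_nonneg)

lemma K2_int: "integrable (M \<Otimes>\<^sub>M M) (\<lambda>p. (K (fst p) (snd p))\<^sup>2)"
  using K_L2 by (simp add: split_beta')

lemma K2_fin: "(\<integral>\<^sup>+p. ennreal ((K (fst p) (snd p))\<^sup>2) \<partial>(M \<Otimes>\<^sub>M M)) < \<infinity>"
  using K2_int unfolding integrable_iff_bounded by simp

lemma K_rect_int: "integrable (M \<Otimes>\<^sub>M M) (\<lambda>p. indicator (c j \<times> c l) p * K (fst p) (snd p))"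
proof (rule Bochner_Integration.integrable_bound[where f="\<lambda>p. indicator (c j \<times> c l) p + (K (fst p) (snd p))\<^sup>2 :: real"])
  show "integrable (M \<Otimes>\<^sub>M M) (\<lambda>p. indicator (c j \<times> c l) p + (K (fst p) (snd p))\<^sup>2 :: real)"
    using K2_int rect_emeasure by (intro Bochner_Integration.integrable_add integrable_real_indicator) auto
  show "AE p in M \<Otimes>\<^sub>M M. norm (indicator (c j \<times> c l) p * K (fst p) (snd p))
     \<le> norm (indicator (c j \<times> c l) p + (K (fst p) (snd p))\<^sup>2 :: real)"
  proof (intro AE_I2)
    fix p
    note abs_le_sq[of "K (fst p) (snd p)"]
    then show "norm (indicator (c j \<times> c l) p * K (fst p) (snd p))
       \<le> norm (indicator (c j \<times> c l) p + (K (fst p) (snd p))\<^sup>2 :: real)"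
      by (auto simp: indicator_def)
  qed
qed measurable

lemma kk_prod: "kk j l = (LINT p|(M \<Otimes>\<^sub>M M). indicator (c j \<times> c l) p * K (fst p) (snd p))"
proof -
  have int: "integrable (M \<Otimes>\<^sub>M M) (\<lambda>(s,t). indicator (c j) s * indicator (c l) t * K s t)"
    using K_rect_int[of j l] by (simp add: split_beta' indicator_times mult.assoc)
  have "kk j l = (LINT s|M. LINT t|M. indicator (c j) s * indicator (c l) t * K s t)"
    unfolding kk_def set_lebesgue_integral_def by (simp add: mult.assoc)
  also have "\<dots> = (LINT p|(M \<Otimes>\<^sub>M M). (\<lambda>(s,t). indicator (c j) s * indicator (c l) t * K s t) p)"
    by (rule P.integral_fst[OF int])
  also have "\<dots> = (LINT p|(M \<Otimes>\<^sub>M M). indicator (c j \<times> c l) p * K (fst p) (snd p))"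
    by (simp add: split_beta' indicator_times)
  finally show ?thesis .
qed

lemma kk_sq: "ennreal ((kk j l)\<^sup>2) \<le> ennreal (mu j * mu l) *
   (\<integral>\<^sup>+p. indicator (c j \<times> c l) p * ennreal ((K (fst p) (snd p))\<^sup>2) \<partial>(M \<Otimes>\<^sub>M M))"
proof -
  define f where "f p = ennreal (indicator (c j \<times> c l) p * \<bar>K (fst p) (snd p)\<bar>)" for p
  define g where "g p = (indicator (c j \<times> c l) p :: ennreal)" for p
  have [measurable]: "f \<in> borel_measurable (M \<Otimes>\<^sub>M M)" "g \<in> borel_measurable (M \<Otimes>\<^sub>M M)"
    unfolding f_def g_def by measurable
  have "norm (kk j l) \<le> (\<integral>\<^sup>+p. norm (indicator (c j \<times> c l) p * K (fst p) (snd p)) \<partial>(M \<Otimes>\<^sub>M M))"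
    unfolding kk_prod by (rule integral_norm_bound_ennreal[OF K_rect_int])
  also have "\<dots> = (\<integral>\<^sup>+p. f p * g p \<partial>(M \<Otimes>\<^sub>M M))"
    by (intro nn_integral_cong) (auto simp: f_def g_def indicator_def abs_mult)
  finally have n: "ennreal \<bar>kk j l\<bar> \<le> (\<integral>\<^sup>+p. f p * g p \<partial>(M \<Otimes>\<^sub>M M))" by simp
  have "ennreal ((kk j l)\<^sup>2) = (ennreal \<bar>kk j l\<bar>)\<^sup>2"
    by (subst ennreal_power) auto
  also have "\<dots> \<le> (\<integral>\<^sup>+p. f p * g p \<partial>(M \<Otimes>\<^sub>M M))\<^sup>2"
    using n by (intro power_mono) auto
  also have "\<dots> \<le> (\<integral>\<^sup>+p. f p ^ 2 \<partial>(M \<Otimes>\<^sub>M M)) * (\<integral>\<^sup>+p. g p ^ 2 \<partial>(M \<Otimes>\<^sub>M M))"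
    by (rule Cauchy_Schwarz_nn_integral) measurable
  also have "(\<integral>\<^sup>+p. g p ^ 2 \<partial>(M \<Otimes>\<^sub>M M)) = ennreal (mu j * mu l)"
  proof -
    have "(\<integral>\<^sup>+p. g p ^ 2 \<partial>(M \<Otimes>\<^sub>M M)) = (\<integral>\<^sup>+p. indicator (c j \<times> c l) p \<partial>(M \<Otimes>\<^sub>M M))"
      by (intro nn_integral_cong) (auto simp: g_def indicator_def)
    then show ?thesis by (simp add: rect_emeasure)
  qed
  also have "(\<integral>\<^sup>+p. f p ^ 2 \<partial>(M \<Otimes>\<^sub>M M)) =
     (\<integral>\<^sup>+p. indicator (c j \<times> c l) p * ennreal ((K (fst p) (snd p))\<^sup>2) \<partial>(M \<Otimes>\<^sub>M M))"
    by (intro nn_integral_cong) (auto simp: f_def indicator_def ennreal_power)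
  finally show ?thesis by (simp add: mult.commute)
qed

lemma E_rect: "(\<integral>\<^sup>+p. indicator (c j \<times> c l) p * ennreal ((E (fst p) (snd p))\<^sup>2) \<partial>(M \<Otimes>\<^sub>M M))
   \<le> (\<integral>\<^sup>+p. indicator (c j \<times> c l) p * ennreal ((K (fst p) (snd p))\<^sup>2) \<partial>(M \<Otimes>\<^sub>M M))"
    (is "?L \<le> ?R")
proof (cases "mu j * mu l = 0")
  case True
  then have "c j \<subseteq> Nn \<or> c l \<subseteq> Nn" using c_null[folded mu_def] by auto
  then have "?L = (\<integral>\<^sup>+p. 0 \<partial>(M \<Otimes>\<^sub>M M))"
    by (intro nn_integral_cong) (auto simp: indicator_def E_def)
  then show ?thesis by simp
next
  case False
  define d where "d = mu j * mu l"
  have dpos: "d > 0" using False mu_nonneg[of j] mu_nonneg[of l] unfolding d_def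
    by (simp add: zero_less_mult_iff less_le)
  have "?L \<le> (\<integral>\<^sup>+p. ennreal ((kk j l / d)\<^sup>2) * indicator (c j \<times> c l) p \<partial>(M \<Otimes>\<^sub>M M))"
    by (intro nn_integral_mono) (auto simp: indicator_def E_def d_def ix_eq)
  also have "\<dots> = ennreal ((kk j l / d)\<^sup>2) * ennreal d"
    by (subst nn_integral_cmult_indicator) (auto simp: rect_emeasure d_def)
  also have "\<dots> = ennreal ((kk j l)\<^sup>2) * ennreal (1 / d)"
    using dpos by (simp add: ennreal_mult[symmetric] power2_eq_square)
  also have "\<dots> \<le> ennreal d * ?R * ennreal (1 / d)"
    using kk_sq[of j l] unfolding d_def by (intro mult_right_mono) auto
  also have "\<dots> = ?R"
  proof -
    have one: "ennreal d * ennreal (1 / d) = 1" using dpos by (simp add: ennreal_mult[symmetric])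
    have "ennreal d * ?R * ennreal (1/d) = (ennreal d * ennreal (1/d)) * ?R"
      by (simp only: mult.assoc mult.commute[of ?R])
    then show ?thesis using one by simp
  qed
  finally show ?thesis .
qed

lemma E2_meas[measurable]: "(\<lambda>p. E (fst p) (snd p)) \<in> borel_measurable (M \<Otimes>\<^sub>M M)"
  using E_meas by (simp add: split_beta')

lemma E_L2: "(\<integral>\<^sup>+p. ennreal ((E (fst p) (snd p))\<^sup>2) \<partial>(M \<Otimes>\<^sub>M M))
    \<le> (\<integral>\<^sup>+p. ennreal ((K (fst p) (snd p))\<^sup>2) \<partial>(M \<Otimes>\<^sub>M M))"
  by (subst (1 2) nn_rect_decomp) (auto intro!: suminf_le E_rect)

lemma E_L2_fin: "(\<integral>\<^sup>+p. ennreal ((E (fst p) (snd p))\<^sup>2) \<partial>(M \<Otimes>\<^sub>M M)) < \<infinity>"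
  using E_L2 K2_fin by (rule le_less_trans)


lemma prod_int:
  fixes f g :: "'a \<Rightarrow> real"
  assumes f: "integrable M f" and g: "integrable M g"
  shows "integrable (M \<Otimes>\<^sub>M M) (\<lambda>p. f (fst p) * g (snd p))"
    and "(LINT p|(M \<Otimes>\<^sub>M M). f (fst p) * g (snd p)) = (LINT x|M. f x) * (LINT x|M. g x)"
proof -
  have [measurable]: "f \<in> borel_measurable M" "g \<in> borel_measurable M" using f g by auto
  have "(\<integral>\<^sup>+p. ennreal (norm (f (fst p) * g (snd p))) \<partial>(M \<Otimes>\<^sub>M M))
     = (\<integral>\<^sup>+x. \<integral>\<^sup>+y. ennreal (norm (f x)) * ennreal (norm (g y)) \<partial>M \<partial>M)"
  proof -
    have "(\<integral>\<^sup>+x. \<integral>\<^sup>+y. (\<lambda>p. ennreal (norm (f (fst p) * g (snd p)))) (x,y) \<partial>M \<partial>M)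
        = (\<integral>\<^sup>+p. ennreal (norm (f (fst p) * g (snd p))) \<partial>(M \<Otimes>\<^sub>M M))"
      using nn_integral_fst[where f="\<lambda>p. ennreal (norm (f (fst p) * g (snd p)))"] by simp
    then show ?thesis by (simp add: abs_mult ennreal_mult)
  qed
  also have "\<dots> = (\<integral>\<^sup>+x. ennreal (norm (f x)) * (\<integral>\<^sup>+y. ennreal (norm (g y)) \<partial>M) \<partial>M)"
    by (intro nn_integral_cong nn_integral_cmult) auto
  also have "\<dots> = (\<integral>\<^sup>+x. ennreal (norm (f x)) \<partial>M) * (\<integral>\<^sup>+y. ennreal (norm (g y)) \<partial>M)"
    by (subst nn_integral_multc) auto
  also have "\<dots> < \<infinity>" using f g unfolding integrable_iff_bounded by (simp add: ennreal_mult_less_top)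
  finally show int: "integrable (M \<Otimes>\<^sub>M M) (\<lambda>p. f (fst p) * g (snd p))"
    unfolding integrable_iff_bounded by simp
  have int': "integrable (M \<Otimes>\<^sub>M M) (\<lambda>(x,y). f x * g y)" using int by (simp add: split_beta')
  have "(LINT p|(M \<Otimes>\<^sub>M M). f (fst p) * g (snd p)) = (LINT x|M. LINT y|M. f x * g y)"
    using P.integral_fst[OF int'] by (simp add: split_beta')
  also have "\<dots> = (LINT x|M. f x) * (LINT x|M. g x)" by simp
  finally show "(LINT p|(M \<Otimes>\<^sub>M M). f (fst p) * g (snd p)) = (LINT x|M. f x) * (LINT x|M. g x)" .
qed

lemma E2_int: "integrable (M \<Otimes>\<^sub>M M) (\<lambda>p. (E (fst p) (snd p))\<^sup>2)"
  unfolding integrable_iff_bounded using E_L2_fin by simp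

lemma h_int:
  assumes e: "e \<in> L2 M"
  shows "integrable (M \<Otimes>\<^sub>M M) (\<lambda>p. E (fst p) (snd p) * e (fst p) * e (snd p))"
proof (rule Bochner_Integration.integrable_bound[where f="\<lambda>p. (E (fst p) (snd p))\<^sup>2 + (e (fst p))\<^sup>2 * (e (snd p))\<^sup>2"])
  have [measurable]: "e \<in> borel_measurable M" using e by (rule L2_meas)
  have e2: "integrable M (\<lambda>x. (e x)\<^sup>2)" using e unfolding L2_def by auto
  show "integrable (M \<Otimes>\<^sub>M M) (\<lambda>p. (E (fst p) (snd p))\<^sup>2 + (e (fst p))\<^sup>2 * (e (snd p))\<^sup>2)"
    using E2_int prod_int(1)[OF e2 e2] by (rule Bochner_Integration.integrable_add)
  show "(\<lambda>p. E (fst p) (snd p) * e (fst p) * e (snd p)) \<in> borel_measurable (M \<Otimes>\<^sub>M M)"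
    by measurable
  show "AE p in M \<Otimes>\<^sub>M M. norm (E (fst p) (snd p) * e (fst p) * e (snd p))
     \<le> norm ((E (fst p) (snd p))\<^sup>2 + (e (fst p))\<^sup>2 * (e (snd p))\<^sup>2)"
  proof (intro AE_I2)
    fix p
    have "norm (E (fst p) (snd p) * (e (fst p) * e (snd p))) \<le> (E (fst p) (snd p))\<^sup>2 + (e (fst p) * e (snd p))\<^sup>2"
      using abs_mult_le_sq by simp
    then show "norm (E (fst p) (snd p) * e (fst p) * e (snd p))
     \<le> norm ((E (fst p) (snd p))\<^sup>2 + (e (fst p))\<^sup>2 * (e (snd p))\<^sup>2)"
      by (simp add: mult.assoc power_mult_distrib)
  qed
qed

lemma intop_eq:
  assumes e: "e \<in> L2 M"
  shows "(LINT x|M. intop M E e x * e x) = (LINT p|(M \<Otimes>\<^sub>M M). E (fst p) (snd p) * e (fst p) * e (snd p))"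
proof -
  have int: "integrable (M \<Otimes>\<^sub>M M) (\<lambda>(x,y). E x y * e y * e x)"
    using h_int[OF e] by (simp add: split_beta' ac_simps)
  have "(LINT x|M. intop M E e x * e x) = (LINT x|M. LINT y|M. E x y * e y * e x)"
    unfolding intop_def by simp
  also have "\<dots> = (LINT p|(M \<Otimes>\<^sub>M M). (\<lambda>(x,y). E x y * e y * e x) p)"
    by (rule P.integral_fst[OF int])
  also have "\<dots> = (LINT p|(M \<Otimes>\<^sub>M M). E (fst p) (snd p) * e (fst p) * e (snd p))"
    by (simp add: split_beta' ac_simps)
  finally show ?thesis .
qed


definition h :: "('a \<Rightarrow> real) \<Rightarrow> 'a \<times> 'a \<Rightarrow> real" where
  "h e p = E (fst p) (snd p) * e (fst p) * e (snd p)"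
definition alpha :: "('a \<Rightarrow> real) \<Rightarrow> nat \<Rightarrow> real" where
  "alpha e j = (LINT x|M. indicator (c j) x * e x)"
definition w :: "('a \<Rightarrow> real) \<Rightarrow> nat \<Rightarrow> real" where
  "w e j = alpha e j / sqrt (mu j)"
definition Kq :: "nat \<Rightarrow> nat \<Rightarrow> real" where
  "Kq j l = kk j l / sqrt (mu j * mu l)"

lemma sum_delta_ix: "(\<Sum>j<(N::nat). (if j = a then f j else 0)) = (if a < N then f a else (0::real))"
  by (induct N) auto

lemma indsum: "(\<Sum>j<N. \<Sum>l<N. indicator (c j \<times> c l) p :: real) = (if ix (fst p) < N \<and> ix (snd p) < N then 1 else 0)"
proof -
  have "(\<Sum>j<N. \<Sum>l<N. indicator (c j \<times> c l) p :: real) =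
     (\<Sum>j<N. (if j = ix (fst p) then (\<Sum>l<N. (if l = ix (snd p) then 1 else 0)) else 0))"
    by (intro sum.cong refl) (auto simp: indicator_times split_beta' ind_c)
  then show ?thesis by (simp add: sum_delta_ix)
qed

lemma c_L2: "indicator (c j) \<in> L2 M"
proof (rule L2_I)
  have "(\<lambda>x. (indicator (c j) x :: real)\<^sup>2) = indicator (c j)" by (auto simp: indicator_def)
  then show "integrable M (\<lambda>x. (indicator (c j) x :: real)\<^sup>2)" by (simp add: emeasure_c)
qed simp

lemma h_meas[measurable]: assumes [measurable]: "e \<in> borel_measurable M" shows "h e \<in> borel_measurable (M \<Otimes>\<^sub>M M)"
  unfolding h_def by measurable

lemma hN_lim:
  assumes e: "e \<in> L2 M"
  shows "(\<lambda>N. LINT p|(M \<Otimes>\<^sub>M M). (\<Sum>j<N. \<Sum>l<N. indicator (c j \<times> c l) p) * h e p)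
     \<longlonglongrightarrow> (LINT p|(M \<Otimes>\<^sub>M M). h e p)"
proof (rule integral_dominated_convergence[where w="\<lambda>p. norm (h e p)"])
  have [measurable]: "e \<in> borel_measurable M" using e by (rule L2_meas)
  show "h e \<in> borel_measurable (M \<Otimes>\<^sub>M M)" by measurable
  show "\<And>N. (\<lambda>p. (\<Sum>j<N. \<Sum>l<N. indicator (c j \<times> c l) p) * h e p) \<in> borel_measurable (M \<Otimes>\<^sub>M M)"
    by measurable
  show "integrable (M \<Otimes>\<^sub>M M) (\<lambda>p. norm (h e p))"
    using h_int[OF e] unfolding h_def by (rule integrable_norm)
  show "AE p in M \<Otimes>\<^sub>M M. (\<lambda>N. (\<Sum>j<N. \<Sum>l<N. indicator (c j \<times> c l) p) * h e p) \<longlonglongrightarrow> h e p"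
  proof (intro AE_I2 tendsto_eventually)
    fix p
    show "\<forall>\<^sub>F N in sequentially. (\<Sum>j<N. \<Sum>l<N. indicator (c j \<times> c l) p) * h e p = h e p"
      using eventually_gt_at_top[of "max (ix (fst p)) (ix (snd p))"]
      by eventually_elim (simp add: indsum)
  qed
  show "\<And>N. AE p in M \<Otimes>\<^sub>M M. norm ((\<Sum>j<N. \<Sum>l<N. indicator (c j \<times> c l) p) * h e p) \<le> norm (h e p)"
    by (intro AE_I2) (simp add: indsum)
qed

lemma Nn_AE: "AE p in M \<Otimes>\<^sub>M M. fst p \<notin> Nn \<and> snd p \<notin> Nn"
proof (rule AE_I')
  have "Nn \<in> null_sets M" using Nn_null by (simp add: null_sets_def)
  then show "Nn \<times> space M \<union> space M \<times> Nn \<in> null_sets (M \<Otimes>\<^sub>M M)"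
    by (intro null_sets.Un times_in_null_sets1 times_in_null_sets2) auto
  show "{p \<in> space (M \<Otimes>\<^sub>M M). \<not> (fst p \<notin> Nn \<and> snd p \<notin> Nn)} \<subseteq> Nn \<times> space M \<union> space M \<times> Nn"
    by (auto simp: space_M)
qed

lemma rect_h:
  assumes e: "e \<in> L2 M"
  shows "(LINT p|(M \<Otimes>\<^sub>M M). indicator (c j \<times> c l) p * h e p) = Kq j l * w e j * w e l"
proof -
  have [measurable]: "e \<in> borel_measurable M" using e by (rule L2_meas)
  have ie: "integrable M (\<lambda>x. indicator (c i) x * e x)" for i by (rule L2_mult_int[OF c_L2 e])
  have "(LINT p|(M \<Otimes>\<^sub>M M). indicator (c j \<times> c l) p * h e p) =
    (LINT p|(M \<Otimes>\<^sub>M M). kk j l / (mu j * mu l) * ((indicator (c j) (fst p) * e (fst p)) * (indicator (c l) (snd p) * e (snd p))))"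
  proof (rule integral_cong_AE)
    show "AE p in M \<Otimes>\<^sub>M M. indicator (c j \<times> c l) p * h e p =
      kk j l / (mu j * mu l) * ((indicator (c j) (fst p) * e (fst p)) * (indicator (c l) (snd p) * e (snd p)))"
      using Nn_AE by eventually_elim (auto simp: indicator_def h_def E_def ix_eq split_beta')
  qed measurable
  also have "\<dots> = kk j l / (mu j * mu l) * (alpha e j * alpha e l)"
    unfolding alpha_def by (simp add: prod_int(2)[OF ie ie])
  also have "\<dots> = Kq j l * w e j * w e l"
    unfolding Kq_def w_def using alg_sqrt[OF mu_nonneg mu_nonneg] by (simp add: mult.assoc)
  finally show ?thesis .
qed

lemma hN_eq:
  assumes e: "e \<in> L2 M"
  shows "(LINT p|(M \<Otimes>\<^sub>M M). (\<Sum>j<N. \<Sum>l<N. indicator (c j \<times> c l) p) * h e p) = qf N Kq (w e)"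
proof -
  have [measurable]: "e \<in> borel_measurable M" using e by (rule L2_meas)
  have int: "integrable (M \<Otimes>\<^sub>M M) (\<lambda>p. indicator (c j \<times> c l) p * h e p)" for j l
    using integrable_mult_indicator[OF _ h_int[OF e], of "c j \<times> c l"] by (simp add: h_def)
  have "(LINT p|(M \<Otimes>\<^sub>M M). (\<Sum>j<N. \<Sum>l<N. indicator (c j \<times> c l) p) * h e p) =
     (LINT p|(M \<Otimes>\<^sub>M M). (\<Sum>j<N. \<Sum>l<N. indicator (c j \<times> c l) p * h e p))"
    by (intro Bochner_Integration.integral_cong refl) (simp only: sum_distrib_right)
  also have "\<dots> = (\<Sum>j<N. LINT p|(M \<Otimes>\<^sub>M M). (\<Sum>l<N. indicator (c j \<times> c l) p * h e p))"
    by (rule Bochner_Integration.integral_sum) (intro Bochner_Integration.integrable_sum int)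
  also have "\<dots> = (\<Sum>j<N. \<Sum>l<N. LINT p|(M \<Otimes>\<^sub>M M). indicator (c j \<times> c l) p * h e p)"
    by (intro sum.cong refl Bochner_Integration.integral_sum) (use int in auto)
  also have "\<dots> = qf N Kq (w e)"
    unfolding qf_def using rect_h[OF e] by simp
  finally show ?thesis .
qed


definition gv :: "nat \<Rightarrow> (nat \<Rightarrow> real) \<Rightarrow> 'a \<Rightarrow> real" where
  "gv N v x = (\<Sum>j<N. v j / sqrt (mu j) * indicator (c j) x)"

lemma gv_meas[measurable]: "gv N v \<in> borel_measurable M"
  unfolding gv_def by measurable

lemma gv_sq: "(gv N v x)\<^sup>2 = (\<Sum>j<N. (v j)\<^sup>2 / mu j * indicator (c j) x)"
proof -
  have "gv N v x = (\<Sum>j<N. if j = ix x then v j / sqrt (mu j) else 0)"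
    unfolding gv_def by (intro sum.cong refl) (simp add: ind_c)
  moreover have "(\<Sum>j<N. (v j)\<^sup>2 / mu j * indicator (c j) x) = (\<Sum>j<N. if j = ix x then (v j)\<^sup>2 / mu j else 0)"
    by (intro sum.cong refl) (simp add: ind_c)
  ultimately show ?thesis using mu_nonneg[of "ix x"] by (simp add: sum_delta_ix power_divide)
qed

lemma c_int: "integrable M (indicator (c j) :: 'a \<Rightarrow> real)"
  by (simp add: emeasure_c)

lemma gv_L2: "gv N v \<in> L2 M" and gv_norm: "(LINT x|M. (gv N v x)\<^sup>2) \<le> (\<Sum>j<N. (v j)\<^sup>2)"
proof -
  have int: "integrable M (\<lambda>x. (gv N v x)\<^sup>2)"
    unfolding gv_sq using c_int by (intro Bochner_Integration.integrable_sum integrable_mult_right) auto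
  then show "gv N v \<in> L2 M" by (intro L2_I) auto
  have "(LINT x|M. (gv N v x)\<^sup>2) = (\<Sum>j<N. (v j)\<^sup>2 / mu j * mu j)"
    unfolding gv_sq using c_int
    by (subst Bochner_Integration.integral_sum) (auto simp: mu_def)
  also have "\<dots> \<le> (\<Sum>j<N. (v j)\<^sup>2)"
    by (intro sum_mono) (auto simp: mu_nonneg)
  finally show "(LINT x|M. (gv N v x)\<^sup>2) \<le> (\<Sum>j<N. (v j)\<^sup>2)" .
qed

lemma gv_inner:
  assumes e: "e \<in> L2 M"
  shows "(LINT x|M. e x * gv N v x) = (\<Sum>j<N. v j * w e j)"
proof -
  have ie: "integrable M (\<lambda>x. indicator (c j) x * e x)" for j by (rule L2_mult_int[OF c_L2 e])
  have "(LINT x|M. e x * gv N v x) = (LINT x|M. (\<Sum>j<N. v j / sqrt (mu j) * (indicator (c j) x * e x)))"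
    unfolding gv_def by (simp add: sum_distrib_left ac_simps)
  also have "\<dots> = (\<Sum>j<N. v j / sqrt (mu j) * alpha e j)"
    unfolding alpha_def using ie by (subst Bochner_Integration.integral_sum) auto
  also have "\<dots> = (\<Sum>j<N. v j * w e j)"
    unfolding w_def by simp
  finally show ?thesis .
qed

lemma bessel_w:
  assumes on: "orthonormal_fam M m e"
  shows "(\<Sum>i<m. (\<Sum>j<N. v j * w (e i) j)\<^sup>2) \<le> (\<Sum>j<N. (v j)\<^sup>2)"
proof -
  have eL2: "i < m \<Longrightarrow> e i \<in> L2 M" for i using on unfolding orthonormal_fam_def by auto
  have "(\<Sum>i<m. (\<Sum>j<N. v j * w (e i) j)\<^sup>2) = (\<Sum>i<m. (LINT x|M. e i x * gv N v x)\<^sup>2)"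
    by (intro sum.cong refl) (simp add: gv_inner eL2)
  also have "\<dots> \<le> (LINT x|M. (gv N v x)\<^sup>2)"
    by (rule bessel[OF on gv_L2])
  also have "\<dots> \<le> (\<Sum>j<N. (v j)\<^sup>2)" by (rule gv_norm)
  finally show ?thesis .
qed


lemma K_sect_meas[measurable]: "(\<lambda>y. K x y) \<in> borel_measurable M"
  using measurable_Pair2[OF K_meas, of x] by (simp add: space_M)

lemma psd_Kq: "0 \<le> qf N Kq v"
proof -
  define a where "a j = v j / sqrt (mu j)" for j
  define g where "g = gv N v"
  define \<psi> where "\<psi> l x = (LINT y|M. K x y * indicator (c l) y)" for l x
  have gL2: "g \<in> L2 M" unfolding g_def by (rule gv_L2)
  have g_eq: "g x = (\<Sum>j<N. a j * indicator (c j) x)" for x unfolding g_def gv_def a_def ..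
  have [measurable]: "g \<in> borel_measurable M" unfolding g_def by simp
  have psi_meas[measurable]: "\<psi> l \<in> borel_measurable M" for l unfolding \<psi>_def by measurable
  have AEK: "AE x in M. integrable M (\<lambda>y. (K x y)\<^sup>2)"
    using P.AE_integrable_fst[of "\<lambda>x y. (K x y)\<^sup>2"] K_L2 by simp
  have AEi: "AE x in M. intop M K g x = (\<Sum>l<N. a l * \<psi> l x)"
    using AEK
  proof eventually_elim
    case (elim x)
    have KL2: "(\<lambda>y. K x y) \<in> L2 M" using elim by (intro L2_I) auto
    have ii: "integrable M (\<lambda>y. K x y * indicator (c l) y)" for l by (rule L2_mult_int[OF KL2 c_L2])
    have "intop M K g x = (LINT y|M. (\<Sum>l<N. a l * (K x y * indicator (c l) y)))"
      unfolding intop_def g_eq by (intro Bochner_Integration.integral_cong refl) (simp only: sum_distrib_left mult.assoc mult.commute mult.left_commute)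
    also have "\<dots> = (\<Sum>l<N. a l * \<psi> l x)"
      unfolding \<psi>_def using ii by (subst Bochner_Integration.integral_sum) auto
    finally show ?case .
  qed
  have intJ: "integrable M (\<lambda>x. indicator (c j) x * \<psi> l x)" for j l
  proof -
    have "integrable (M \<Otimes>\<^sub>M M) (\<lambda>(x,y). indicator (c j) x * (K x y * indicator (c l) y))"
      using K_rect_int[of j l] by (simp add: split_beta' indicator_times ac_simps)
    from P.integrable_fst[OF this] show ?thesis unfolding \<psi>_def by simp
  qed
  have kkJ: "(LINT x|M. indicator (c j) x * \<psi> l x) = kk j l" for j l
    unfolding kk_def \<psi>_def set_lebesgue_integral_def by (simp add: ac_simps)
  have "0 \<le> (LINT x|M. intop M K g x * g x)"
    using K_pd gL2 unfolding L2_pos_def_kernel_def by blast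
  also have "(LINT x|M. intop M K g x * g x) = (LINT x|M. (\<Sum>l<N. a l * \<psi> l x) * g x)"
  proof (rule integral_cong_AE)
    show "(\<lambda>x. intop M K g x * g x) \<in> borel_measurable M" unfolding intop_def by measurable
    show "(\<lambda>x. (\<Sum>l<N. a l * \<psi> l x) * g x) \<in> borel_measurable M" by measurable
    show "AE x in M. intop M K g x * g x = (\<Sum>l<N. a l * \<psi> l x) * g x"
      using AEi by eventually_elim simp
  qed
  also have "\<dots> = (LINT x|M. (\<Sum>j<N. \<Sum>l<N. a j * a l * (indicator (c j) x * \<psi> l x)))"
  proof (intro Bochner_Integration.integral_cong refl)
    fix x
    have "(\<Sum>l<N. a l * \<psi> l x) * g x = g x * (\<Sum>l<N. a l * \<psi> l x)" by (rule mult.commute)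
    also have "\<dots> = (\<Sum>j<N. \<Sum>l<N. (a j * indicator (c j) x) * (a l * \<psi> l x))"
      unfolding g_eq by (simp only: sum_distrib_left sum_distrib_right) (rule sum.swap)
    finally show "(\<Sum>l<N. a l * \<psi> l x) * g x = (\<Sum>j<N. \<Sum>l<N. a j * a l * (indicator (c j) x * \<psi> l x))"
      by (simp only: mult.assoc mult.commute mult.left_commute)
  qed
  also have "\<dots> = (\<Sum>j<N. \<Sum>l<N. a j * a l * kk j l)"
    using intJ by (simp add: Bochner_Integration.integral_sum Bochner_Integration.integrable_sum kkJ)
  also have "\<dots> = qf N Kq v"
    unfolding qf_def Kq_def a_def by (intro sum.cong refl) (simp only: alg2 real_sqrt_mult)
  finally show ?thesis .
qed


lemma Kq_diag_nonneg: "0 \<le> Kq j j"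
proof -
  have "qf (Suc j) Kq (\<lambda>i. if i = j then 1 else 0) = (\<Sum>a<Suc j. if a = j then (\<Sum>b<Suc j. if b = j then Kq j j else 0) else 0)"
    unfolding qf_def by (intro sum.cong refl) (auto simp: dsum)
  also have "\<dots> = Kq j j" by simp
  finally show ?thesis using psd_Kq[of "Suc j" "\<lambda>i. if i = j then 1 else 0"] by simp
qed

lemma AE_Nn: "AE x in M. x \<notin> Nn"
  by (rule AE_I'[of Nn]) (auto simp: null_sets_def Nn_null)

lemma diag_cell: "ennreal (Kq j j) = (\<integral>\<^sup>+x. indicator (c j) x * ennreal (E x x) \<partial>M)"
proof (cases "mu j = 0")
  case True
  then have "c j \<subseteq> Nn" using c_null[folded mu_def] by auto
  then have "(\<integral>\<^sup>+x. indicator (c j) x * ennreal (E x x) \<partial>M) = (\<integral>\<^sup>+x. 0 \<partial>M)"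
    by (intro nn_integral_cong) (auto simp: indicator_def E_def)
  then show ?thesis using True by (simp add: Kq_def)
next
  case False
  then have mp: "mu j > 0" using mu_nonneg[of j] by simp
  have Kq: "Kq j j = kk j j / mu j" unfolding Kq_def using mp by simp
  then have kk0: "kk j j \<ge> 0" using Kq_diag_nonneg[of j] mp by (simp add: zero_le_divide_iff)
  have "(\<integral>\<^sup>+x. indicator (c j) x * ennreal (E x x) \<partial>M) = (\<integral>\<^sup>+x. ennreal (kk j j / (mu j * mu j)) * indicator (c j) x \<partial>M)"
    using AE_Nn by (intro nn_integral_cong_AE) (auto elim!: eventually_mono simp: indicator_def E_def ix_eq)
  also have "\<dots> = ennreal (kk j j / (mu j * mu j)) * ennreal (mu j)"
    by (subst nn_integral_cmult_indicator) (auto simp: emeasure_c)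
  also have "\<dots> = ennreal (Kq j j)"
    using mp kk0 by (simp add: ennreal_mult[symmetric] Kq)
  finally show ?thesis ..
qed

lemma diag_bound: "ennreal (\<Sum>j<N. Kq j j) \<le> (\<integral>\<^sup>+x. ennreal (E x x) \<partial>M)"
proof -
  have Em[measurable]: "(\<lambda>x. E x x) \<in> borel_measurable M"
    using measurable_Pair[OF measurable_ident_sets[OF refl] measurable_ident_sets[OF refl], THEN measurable_compose, OF E_meas]
    by simp
  have "ennreal (\<Sum>j<N. Kq j j) = (\<Sum>j<N. ennreal (Kq j j))"
    using Kq_diag_nonneg by (simp add: sum_ennreal)
  also have "\<dots> = (\<Sum>j<N. \<integral>\<^sup>+x. indicator (c j) x * ennreal (E x x) \<partial>M)"
    by (simp add: diag_cell)
  also have "\<dots> = (\<integral>\<^sup>+x. (\<Sum>j<N. indicator (c j) x * ennreal (E x x)) \<partial>M)"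
    by (rule nn_integral_sum[symmetric]) measurable
  also have "\<dots> \<le> (\<integral>\<^sup>+x. ennreal (E x x) \<partial>M)"
  proof (intro nn_integral_mono)
    fix x
    have "(\<Sum>j<N. indicator (c j) x * ennreal (E x x)) = (\<Sum>j<N. if j = ix x then ennreal (E x x) else 0)"
      by (intro sum.cong refl) (simp add: ind_c)
    also have "\<dots> \<le> ennreal (E x x)" by (cases "ix x < N") auto
    finally show "(\<Sum>j<N. indicator (c j) x * ennreal (E x x)) \<le> ennreal (E x x)" .
  qed
  finally show ?thesis .
qed

theorem trace_le:
  assumes on: "orthonormal_fam M m e"
  shows "ereal (\<Sum>i<m. LINT x|M. intop M E (e i) x * e i x) \<le> enn2ereal (\<integral>\<^sup>+x. ennreal (E x x) \<partial>M)"
proof -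
  have eL2: "i < m \<Longrightarrow> e i \<in> L2 M" for i using on unfolding orthonormal_fam_def by auto
  define S where "S N = (\<Sum>i<m. qf N Kq (w (e i)))" for N
  have lim: "S \<longlonglongrightarrow> (\<Sum>i<m. LINT x|M. intop M E (e i) x * e i x)"
    unfolding S_def
  proof (intro tendsto_sum)
    fix i assume "i \<in> {..<m}"
    then have e: "e i \<in> L2 M" using eL2 by auto
    show "(\<lambda>N. qf N Kq (w (e i))) \<longlonglongrightarrow> (LINT x|M. intop M E (e i) x * e i x)"
      using hN_lim[OF e, unfolded hN_eq[OF e]] intop_eq[OF e] by (simp add: h_def)
  qed
  have Sle: "ennreal (S N) \<le> (\<integral>\<^sup>+x. ennreal (E x x) \<partial>M)" for N
  proof -
    have "S N \<le> (\<Sum>j<N. Kq j j)"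
      unfolding S_def by (rule trace_bound[OF psd_Kq bessel_w[OF on]])
    then have "ennreal (S N) \<le> ennreal (\<Sum>j<N. Kq j j)" by (rule ennreal_leI)
    also note diag_bound
    finally show ?thesis .
  qed
  show ?thesis
  proof (cases "(\<integral>\<^sup>+x. ennreal (E x x) \<partial>M) = \<infinity>")
    case True then show ?thesis by simp
  next
    case False
    then obtain r where r: "(\<integral>\<^sup>+x. ennreal (E x x) \<partial>M) = ennreal r" "r \<ge> 0"
      by (cases "(\<integral>\<^sup>+x. ennreal (E x x) \<partial>M)") auto
    have "S N \<le> r" for N
    proof -
      have "ennreal (S N) \<le> ennreal r" using Sle[of N] r by simp
      then show ?thesis using r(2) by (cases "S N \<ge> 0") (auto simp: ennreal_le_iff)
    qed
    then have "(\<Sum>i<m. LINT x|M. intop M E (e i) x * e i x) \<le> r"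
      by (intro LIMSEQ_le_const2[OF lim]) auto
    then show ?thesis using r by simp
  qed
qed

end


lemma closure_finite_UN: "closure (\<Union>j<(k::nat). S j) = (\<Union>j<k. closure (S j))"
  by (induct k) (auto simp: lessThan_Suc)

lemma partitionP_countable: "countable (partitionP A U n)"
  by (induct n) auto

lemma partitionP_borel:
  assumes "\<And>k. open (A k)" "\<And>n. open (U n)"
  shows "B \<in> partitionP A U n \<Longrightarrow> B \<in> sets borel"
proof (induct n arbitrary: B)
  case 0
  have a: "A k \<in> sets borel" "closure S \<in> sets borel" "frontier (A k) \<in> sets borel" for k and S :: "'a set"
    using assms by (auto intro: borel_open borel_closed)
  from 0 show ?case using sets.Diff[OF a(1) a(2)] sets.Diff[OF a(3) a(2)] by auto
next
  case (Suc n)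
  have a: "U n \<in> sets borel" "UNIV - closure (U n) \<in> sets borel" "frontier (U n) \<in> sets borel"
    using assms by (auto intro: borel_open borel_closed)
  from Suc show ?case using sets.Int[OF a(1)] sets.Int[OF a(2)] sets.Int[OF a(3)] by auto
qed

lemma partitionP_cover:
  assumes A_open: "\<And>k. open (A k)" and A_cover: "(\<Union>k. A k) = UNIV" and U_open: "\<And>n. open (U n)"
  shows "\<exists>B\<in>partitionP A U n. x \<in> B"
proof (induct n)
  case 0
  obtain k where "x \<in> A k" using A_cover by auto
  then have ex: "\<exists>k. x \<in> closure (A k)" using closure_subset by blast
  define k0 where "k0 = (LEAST k. x \<in> closure (A k))"
  have k0: "x \<in> closure (A k0)" unfolding k0_def using ex by (rule LeastI_ex)
  have "j < k0 \<Longrightarrow> x \<notin> closure (A j)" for j unfolding k0_def using not_less_Least by blast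
  then have nc: "x \<notin> closure (\<Union>j<k0. A j)" by (auto simp: closure_finite_UN)
  show ?case
  proof (cases "x \<in> A k0")
    case True
    then show ?thesis using nc by auto
  next
    case False
    then have "x \<in> frontier (A k0)" using k0 A_open by (simp add: frontier_def interior_open)
    then show ?thesis using nc by auto
  qed
next
  case (Suc n)
  then obtain B where B: "B \<in> partitionP A U n" "x \<in> B" by auto
  have "x \<in> U n \<or> x \<in> UNIV - closure (U n) \<or> x \<in> frontier (U n)"
    using U_open by (auto simp: frontier_def interior_open)
  then show ?case using B by auto
qed

lemma partitionP_disj:
  assumes A_open: "\<And>k. open (A k)" and U_open: "\<And>n. open (U n)"
  shows "B \<in> partitionP A U n \<Longrightarrow> B' \<in> partitionP A U n \<Longrightarrow> x \<in> B \<Longrightarrow> x \<in> B' \<Longrightarrow> B = B'"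
proof (induct n arbitrary: B B')
  case 0
  have fr: "frontier (A k) \<subseteq> closure (A k)" "frontier (A k) \<inter> A k = {}" for k
    using A_open by (auto simp: frontier_def interior_open)
  have lt: "j < k \<Longrightarrow> closure (A j) \<subseteq> closure (\<Union>i<k. A i)" for j k
    by (intro closure_mono) auto
  have lt': "j < k \<Longrightarrow> A j \<subseteq> closure (\<Union>i<k. A i)" for j k
    using lt closure_subset by blast
  have one: "k = k'" if "x \<in> A k - closure (\<Union>j<k. A j)" "x \<in> A k' - closure (\<Union>j<k'. A j)" for k k'
    using that lt'[of k k'] lt'[of k' k] by (cases k k' rule: linorder_cases) auto
  have two: "k = k'" if "x \<in> frontier (A k) - closure (\<Union>j<k. A j)" "x \<in> frontier (A k') - closure (\<Union>j<k'. A j)" for k k'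
    using that lt[of k k'] lt[of k' k] fr by (cases k k' rule: linorder_cases) auto
  have three: False if "x \<in> A k - closure (\<Union>j<k. A j)" "x \<in> frontier (A k') - closure (\<Union>j<k'. A j)" for k k'
    using that lt'[of k k'] lt[of k' k] fr by (cases k k' rule: linorder_cases) blast+
  define F1 where "F1 k = A k - closure (\<Union>j<k. A j)" for k
  define F2 where "F2 k = frontier (A k) - closure (\<Union>j<k. A j)" for k
  have P0: "partitionP A U 0 = range F1 \<union> range F2" unfolding F1_def F2_def by simp
  obtain k where k: "B = F1 k \<or> B = F2 k" using 0(1) unfolding P0 by blast
  obtain k' where k': "B' = F1 k' \<or> B' = F2 k'" using 0(2) unfolding P0 by blast
  show ?case
  proof (cases "B = F1 k")
    case True
    note B = this
    show ?thesis
    proof (cases "B' = F1 k'")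
      case True
      then show ?thesis using B one[of k k'] 0(3,4) unfolding F1_def by simp
    next
      case False
      then have "B' = F2 k'" using k' by simp
      then show ?thesis using B three[of k k'] 0(3,4) unfolding F1_def F2_def by simp
    qed
  next
    case False
    then have B: "B = F2 k" using k by simp
    show ?thesis
    proof (cases "B' = F1 k'")
      case True
      then show ?thesis using B three[of k' k] 0(3,4) unfolding F1_def F2_def by simp
    next
      case False
      then have "B' = F2 k'" using k' by simp
      then show ?thesis using B two[of k k'] 0(3,4) unfolding F2_def by simp
    qed
  qed
next
  case (Suc n)
  from Suc.prems obtain C S where C: "C \<in> partitionP A U n" "S \<in> {U n, UNIV - closure (U n), frontier (U n)}" "B = S \<inter> C"
    by auto
  from Suc.prems obtain C' S' where C': "C' \<in> partitionP A U n" "S' \<in> {U n, UNIV - closure (U n), frontier (U n)}" "B' = S' \<inter> C'"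
    by auto
  have "C = C'" using Suc.hyps[OF C(1) C'(1)] Suc.prems C C' by auto
  moreover have "S = S'"
    using C(2) C'(2) Suc.prems C C' U_open closure_subset[of "U n"]
    by (auto simp: frontier_def interior_open)
  ultimately show ?case using C C' by simp
qed

lemma cellO:
  assumes A_open: "\<And>k. open (A k)" and A_cover: "(\<Union>k. A k) = UNIV" and U_open: "\<And>n. open (U n)"
  shows "cellO A U n x \<in> partitionP A U n \<and> x \<in> cellO A U n x"
proof -
  obtain B where B: "B \<in> partitionP A U n" "x \<in> B" using partitionP_cover[of A U, OF A_open A_cover U_open] by blast
  have "\<exists>!B. B \<in> partitionP A U n \<and> x \<in> B"
  proof (rule ex1I[of _ B])
    show "B \<in> partitionP A U n \<and> x \<in> B" using B by simp
    show "\<And>B'. B' \<in> partitionP A U n \<and> x \<in> B' \<Longrightarrow> B' = B"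
      using B partitionP_disj[of A U, OF A_open U_open] by blast
  qed
  then show ?thesis unfolding cellO_def by (rule theI')
qed

lemma cellO_eq:
  assumes A_open: "\<And>k. open (A k)" and A_cover: "(\<Union>k. A k) = UNIV" and U_open: "\<And>n. open (U n)"
  shows "B \<in> partitionP A U n \<Longrightarrow> x \<in> B \<Longrightarrow> cellO A U n x = B"
proof -
  assume B: "B \<in> partitionP A U n" "x \<in> B"
  have c: "cellO A U n x \<in> partitionP A U n" "x \<in> cellO A U n x" using cellO[of A U, OF A_open A_cover U_open, of n x] by auto
  show ?thesis by (rule partitionP_disj[of A U, OF A_open U_open c(1) B(1) c(2) B(2)])
qed

lemma partitionP_sub0: "B \<in> partitionP A U n \<Longrightarrow> \<exists>B0\<in>partitionP A U 0. B \<subseteq> B0"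
proof (induct n arbitrary: B)
  case 0 then show ?case by (intro bexI[of _ B]) simp_all
next
  case (Suc n)
  then obtain C where C: "C \<in> partitionP A U n" "B \<subseteq> C" by auto
  from Suc.hyps[OF C(1)] obtain B0 where "B0 \<in> partitionP A U 0" "C \<subseteq> B0" by blast
  then show ?case using C(2) by (intro bexI[of _ B0]) simp_all
qed

lemma partitionP0_sub:
  assumes A_open: "\<And>k. open (A k)"
  shows "B \<in> partitionP A U 0 \<Longrightarrow> \<exists>k. B \<subseteq> closure (A k)"
proof -
  assume "B \<in> partitionP A U 0"
  then obtain k where "B = A k - closure (\<Union>j<k. A j) \<or> B = frontier (A k) - closure (\<Union>j<k. A j)" by auto
  moreover have "A k \<subseteq> closure (A k)" "frontier (A k) \<subseteq> closure (A k)"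
    using closure_subset by (auto simp: frontier_def)
  ultimately show ?thesis by blast
qed

lemma compact_fin:
  fixes M :: "'a::topological_space measure"
  assumes sets_M: "sets M = sets borel" and locfin: "\<And>x. \<exists>S. open S \<and> x \<in> S \<and> emeasure M S < \<infinity>"
    and C: "compact C"
  shows "emeasure M C < \<infinity>"
proof -
  let ?T = "{S. open S \<and> emeasure M S < \<infinity>}"
  have "C \<subseteq> \<Union>?T" using locfin by blast
  then obtain T' where T': "T' \<subseteq> ?T" "finite T'" "C \<subseteq> \<Union>T'"
    using compactE[OF C] by blast
  have sT: "S \<in> sets M" if "S \<in> T'" for S using T' that sets_M by (auto intro: borel_open)
  have "emeasure M C \<le> emeasure M (\<Union>S\<in>T'. S)"
    using T' sT by (intro emeasure_mono) (auto intro!: sets.finite_UN)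
  also have "\<dots> \<le> (\<Sum>S\<in>T'. emeasure M S)"
    using T' sT by (intro emeasure_subadditive_finite) auto
  also have "\<dots> < \<infinity>" using T' by (auto simp: sum_Pinfty less_top)
  finally show ?thesis .
qed



theorem lemma4p2:
  fixes M :: "'a::{t2_space, second_countable_topology} measure"
    and A U :: "nat \<Rightarrow> 'a set"
    and K :: "'a \<Rightarrow> 'a \<Rightarrow> real"
  assumes loccpt: "locally_compact_space (euclidean :: 'a topology)"
    and sets_M: "sets M = sets borel"
    and nondeg: "\<And>S. open S \<Longrightarrow> S \<noteq> {} \<Longrightarrow> emeasure M S > 0"
    and sfin: "sigma_finite_measure M"
    and locfin: "\<And>x. \<exists>S. open S \<and> x \<in> S \<and> emeasure M S < \<infinity>"
    and A_open: "\<And>k. open (A k)"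
    and A_int: "\<And>k. \<exists>C. compact C \<and> A k = interior C"
    and A_fin: "\<And>k. emeasure M (A k) < \<infinity>"
    and A_cover: "(\<Union>k. A k) = UNIV"
    and U_open: "\<And>n. open (U n)"
    and U_base: "\<And>S x. open S \<Longrightarrow> x \<in> S \<Longrightarrow> \<exists>n. x \<in> U n \<and> U n \<subseteq> S"
    and K_meas: "(\<lambda>(x, y). K x y) \<in> borel_measurable (M \<Otimes>\<^sub>M M)"
    and K_L2: "integrable (M \<Otimes>\<^sub>M M) (\<lambda>(x, y). (K x y)\<^sup>2)"
    and K_pd: "L2_pos_def_kernel M K"
    and hyp: "limsup (\<lambda>n. \<integral>\<^sup>+ x. ennreal (En M A U n K x x) \<partial>M) < \<infinity>"
  shows "limsup (\<lambda>n. op_trace M (En M A U n K)) < \<infinity>"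
proof -
  have space: "space M = UNIV" using sets_eq_imp_space_eq[OF sets_M] by simp
  have Pb: "B \<in> partitionP A U n \<Longrightarrow> B \<in> sets M" for B n
    using partitionP_borel[of A U, OF A_open U_open] sets_M by auto
  have Pfin: "B \<in> partitionP A U n \<Longrightarrow> emeasure M B < \<infinity>" for B n
  proof -
    assume "B \<in> partitionP A U n"
    then obtain B0 where "B0 \<in> partitionP A U 0" "B \<subseteq> B0" using partitionP_sub0 by blast
    then obtain k where Bk: "B \<subseteq> closure (A k)" using partitionP0_sub[of A, OF A_open] by blast
    obtain C where C: "compact C" "A k = interior C" using A_int by blast
    have "closure (A k) \<subseteq> C"
      using C compact_imp_closed[OF C(1)] interior_subset by (metis closure_minimal)
    with Bk have "B \<subseteq> C" by auto
    have "C \<in> sets M" using C sets_M compact_imp_closed by (auto intro: borel_closed)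
    then have "emeasure M B \<le> emeasure M C" using \<open>B \<subseteq> C\<close> by (intro emeasure_mono)
    also have "\<dots> < \<infinity>" by (rule compact_fin[OF sets_M locfin C(1)])
    finally show ?thesis .
  qed
  define Nn where "Nn = nullpts M A U"
  have Nn_eq: "Nn = (\<Union>m. \<Union>B\<in>{B\<in>partitionP A U m. emeasure M B = 0}. B)"
  proof -
    have "x \<in> Nn \<longleftrightarrow> (\<exists>m. \<exists>B\<in>partitionP A U m. emeasure M B = 0 \<and> x \<in> B)" for x
    proof
      assume "x \<in> Nn"
      then obtain m where "emeasure M (cellO A U m x) = 0" unfolding Nn_def nullpts_def by auto
      then show "\<exists>m. \<exists>B\<in>partitionP A U m. emeasure M B = 0 \<and> x \<in> B"
        using cellO[of A U, OF A_open A_cover U_open, of m x] by blast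
    next
      assume "\<exists>m. \<exists>B\<in>partitionP A U m. emeasure M B = 0 \<and> x \<in> B"
      then obtain m B where "B \<in> partitionP A U m" "emeasure M B = 0" "x \<in> B" by blast
      then show "x \<in> Nn" unfolding Nn_def nullpts_def
        using cellO_eq[of A U, OF A_open A_cover U_open] by auto
    qed
    then show ?thesis by blast
  qed
  have Nn_null: "Nn \<in> null_sets M"
    unfolding Nn_eq
    by (intro null_sets_UN null_sets_UN' countable_subset[OF _ partitionP_countable])
      (auto simp: null_sets_def Pb)
  have bound: "op_trace M (En M A U n K) \<le> enn2ereal (\<integral>\<^sup>+ x. ennreal (En M A U n K x x) \<partial>M)" for n
  proof -
    let ?P = "partitionP A U n"
    have Pne: "?P \<noteq> {}" using partitionP_cover[of A U, OF A_open A_cover U_open, of n undefined] by auto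
    define f where "f = from_nat_into ?P"
    have rf: "range f = ?P" unfolding f_def using Pne partitionP_countable[of A U n] by (rule range_from_nat_into)
    define c where "c = disjointed f"
    have fP: "f j \<in> ?P" for j using rf by auto
    have c_eq: "c j = f j" if "x \<in> c j" for j x
    proof -
      have "f i \<inter> f j = {}" if "i < j" for i
      proof (rule ccontr)
        assume "f i \<inter> f j \<noteq> {}"
        then obtain y where "y \<in> f i" "y \<in> f j" by auto
        then have "f i = f j" using partitionP_disj[of A U, OF A_open U_open fP fP] by blast
        then show False using \<open>x \<in> c j\<close> \<open>i < j\<close> unfolding c_def disjointed_def by auto
      qed
      then show ?thesis unfolding c_def disjointed_def by (auto simp: disjoint_iff)
    qed
    interpret cells M c Nn K
    proof (rule cells.intro)
      show "sigma_finite_measure M" by (rule sfin)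
      show "space M = UNIV" by (rule space)
      show "c j \<in> sets M" for j unfolding c_def disjointed_def
        using fP Pb by (intro sets.Diff sets.finite_UN) auto
      show "emeasure M (c j) < \<infinity>" for j
        using Pfin[OF fP[of j]] emeasure_mono[OF disjointed_subset Pb[OF fP]]
        unfolding c_def by (rule le_less_trans[rotated])
      show "disjoint_family c" unfolding c_def by (rule disjoint_family_disjointed)
      show "(\<Union>j. c j) = UNIV" unfolding c_def UN_disjointed_eq rf
        using partitionP_cover[of A U, OF A_open A_cover U_open] by auto
      show "Nn \<in> sets M" "emeasure M Nn = 0" using Nn_null by auto
      show "c j \<subseteq> Nn" if "measure M (c j) = 0" for j
      proof
        fix x assume x: "x \<in> c j"
        then have cf: "c j = f j" by (rule c_eq)
        have "emeasure M (f j) = 0"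
          using that Pfin[OF fP[of j]] unfolding cf by (auto simp: measure_def enn2real_eq_0_iff)
        then show "x \<in> Nn" unfolding Nn_eq using fP[of j] x cf by auto
      qed
    qed fact+
    have cell: "cellO A U n x = c (ix x)" for x
    proof -
      have "c (ix x) = f (ix x)" using ix by (rule c_eq)
      then show ?thesis using cellO_eq[of A U, OF A_open A_cover U_open fP[of "ix x"]] ix[of x] by metis
    qed
    have EE: "En M A U n K = E"
      unfolding En_def E_def mu_def kk_def Nn_def[symmetric] cell by simp
    show ?thesis
      unfolding op_trace_def EE
      by (rule SUP_least) (auto intro: trace_le)
  qed
  obtain l where l: "limsup (\<lambda>n. \<integral>\<^sup>+ x. ennreal (En M A U n K x x) \<partial>M) < l" "l < \<infinity>"
    using hyp by (meson dense)
  have "eventually (\<lambda>n. (\<integral>\<^sup>+ x. ennreal (En M A U n K x x) \<partial>M) < l) sequentially"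
    using Limsup_lessD[OF l(1)] .
  then have "eventually (\<lambda>n. op_trace M (En M A U n K) \<le> enn2ereal l) sequentially"
  proof eventually_elim
    case (elim n)
    then have "enn2ereal (\<integral>\<^sup>+ x. ennreal (En M A U n K x x) \<partial>M) \<le> enn2ereal l"
      by (simp add: less_imp_le less_eq_ennreal.rep_eq[symmetric])
    with bound[of n] show ?case by (rule order_trans)
  qed
  then have "limsup (\<lambda>n. op_trace M (En M A U n K)) \<le> enn2ereal l" by (rule Limsup_bounded)
  also have "\<dots> < \<infinity>" using l(2) by (simp add: less_top[symmetric])
  finally show ?thesis .
qed

end
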